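(* In the setting below, if $g(x)$ is self-reciprocal, then $\gcd(t_{22}(x),g_{12}(x))=1$ if and only if $\gcd\big(t_{22}(x),\ g_{11}(x)\bar g_{11}(x)+g_{12}(x)\bar g_{12}(x)\big)=1$.
   Context: Let $q$ be a prime power, $F=\mathbb{F}_q$, $m\ge1$ with $\gcd(q,m)=1$. For a nonzero polynomial $f$ of degree $k$, $f^*(x)=x^kf(x^{-1})$; $f$ is self-reciprocal if $f^*=\alpha f$ for some $\alpha\in F$. For a polynomial $f$ of degree at most $m$, $\bar f(x)=x^m f(x^{-1})$. Let $g_{11},g_{12}\in F[x]$ with $g_{11}\mid x^m-1$ and $\deg g_{12}<m$ (so that $(g_{11},g_{12})$ generates a one-generator quasi-cyclic code of index 2 in $(F[x]/\langle x^m-1\rangle)^2$). Let $g=\gcd(g_{11},g_{12})$, $g_{11}=g\,g_{11}'$, $g_{22}=(x^m-1)/g_{11}'$, $g_{22}=g\,g_{22}'$, $r_{22}=\gcd(g_{22}',g_{22}'^* )$, $t_{22}=g_{22}'/r_{22}$. *)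

theory Defs
  imports "HOL-Computational_Algebra.Computational_Algebra" "HOL-Library.Cardinality"
begin

text \<open>Reciprocal f* (x) = x^(deg f) f(1/x) is the library's reflect_poly.
 Self-reciprocal: f nonzero and f* = alpha f for some alpha in F.\<close>
definition self_reciprocal :: "'a::field poly \<Rightarrow> bool" where
  "self_reciprocal f \<longleftrightarrow> f \<noteq> 0 \<and> (\<exists>\<alpha>. reflect_poly f = smult \<alpha> f)"

text \<open>bar f (x) = x^m f(1/x), for deg f \<le> m.\<close>
definition bar_poly :: "nat \<Rightarrow> 'a::field poly \<Rightarrow> 'a poly" where
  "bar_poly m f = monom 1 (m - degree f) * reflect_poly f"

end

theory Submission
  imports Defs
begin

lemma char_m:
  assumes "coprime (CARD('a::{field,finite})) m"
  shows "of_nat m \<noteq> (0::'a)"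
proof
  assume "of_nat m = (0::'a)"
  then have "CHAR('a) dvd m" by (simp add: of_nat_eq_0_iff_char_dvd)
  moreover have "CHAR('a) dvd CARD('a)"
  proof -
    have "(\<Sum>x\<in>(UNIV::'a set). x + 1) = (\<Sum>x\<in>UNIV. x)"
      by (rule sum.reindex_bij_witness[of _ "\<lambda>x. x - 1" "\<lambda>x. x + 1"]) auto
    then have "of_nat CARD('a) = (0::'a)" by (simp add: sum.distrib)
    then show ?thesis by (simp add: of_nat_eq_0_iff_char_dvd)
  qed
  ultimately have "CHAR('a) dvd 1" using assms by (meson coprime_common_divisor)
  then show False by simp
qed

lemma X0: "m \<ge> 1 \<Longrightarrow> poly (monom (1::'a::field) m - 1) 0 = -1"
  by (simp add: poly_monom)

lemma coeff0_nz:
  fixes p :: "'a::field poly"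
  assumes "m \<ge> 1" "p dvd monom 1 m - 1"
  shows "coeff p 0 \<noteq> 0"
proof
  assume h: "coeff p 0 = 0"
  from assms(2) obtain c where "monom 1 m - 1 = p * c" by blast
  then have "poly (monom 1 m - 1) 0 = poly p 0 * poly c 0" by simp
  then show False using X0[OF assms(1), where 'a='a] h by (simp add: poly_0_coeff_0)
qed

lemma prime_not_dvd_x:
  fixes p :: "'a::field poly"
  assumes "prime_elem p" "coeff p 0 \<noteq> 0"
  shows "\<not> p dvd [:0,1:]"
proof
  assume "p dvd [:0,1:]"
  then obtain c where c: "[:0,1:] = p * c" by blast
  then have "poly [:0,1:] 0 = poly p 0 * poly c 0" by simp
  then have "poly c 0 = 0" using assms(2) by (simp add: poly_0_coeff_0)
  then have "[:0,1:] dvd c" using dvd_iff_poly_eq_0[of 0 c] by simp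
  then obtain d where dd: "c = [:0,1:] * d" by blast
  have "[:0,1:] * (p * d) = [:0,1:] * 1" using c dd by (metis mult.left_commute mult_1_right)
  then have "p * d = 1" by (rule mult_left_cancel[THEN iffD1, rotated]) simp
  then have "is_unit p" by (metis dvdI)
  then show False using assms(1) by (simp add: prime_elem_def)
qed

lemma cancel_monom:
  fixes p :: "'a::field poly"
  assumes "prime_elem p" "coeff p 0 \<noteq> 0" "p dvd monom 1 k * h"
  shows "p dvd h"
proof -
  have "\<not> p dvd monom 1 k"
  proof
    assume "p dvd monom 1 k"
    then have "p dvd [:0,1:]^k" by (simp add: monom_altdef)
    then have "p dvd [:0,1:]" using assms(1) prime_elem_dvd_power by blast
    then show False using prime_not_dvd_x assms by blast
  qed
  then show ?thesis using assms prime_elem_dvd_mult_iff by blast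
qed

lemma sqfree:
  fixes p :: "'a::field poly"
  assumes "m \<ge> 1" "of_nat m \<noteq> (0::'a)" "prime_elem p" "p * p dvd monom 1 m - 1"
  shows False
proof -
  obtain c where c: "monom 1 m - 1 = p * p * c" using assms(4) by blast
  have pX: "p dvd monom 1 m - 1" using assms(4) dvd_mult_left by blast
  have cp: "coeff p 0 \<noteq> 0" by (rule coeff0_nz[OF assms(1) pX])
  have "pderiv (monom 1 m - 1) = pderiv (p * (p * c))" by (simp add: c mult_ac)
  also have "\<dots> = p * pderiv (p*c) + (p*c) * pderiv p" by (simp add: pderiv_mult)
  finally have e: "pderiv (monom 1 m - 1) = p * pderiv (p*c) + (p*c) * pderiv p" .
  have "p dvd p * pderiv (p*c) + (p*c) * pderiv p" by (intro dvd_add) simp_all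
  then have pd: "p dvd pderiv (monom 1 m - 1)" unfolding e .
  have "pderiv (monom (1::'a) m - 1) = smult (of_nat m) (monom 1 (m-1))"
    by (simp add: pderiv_monom pderiv_diff smult_monom)
  with pd have "p dvd smult (of_nat m) (monom 1 (m-1))" by simp
  then have "p dvd monom 1 (m-1)" using assms(2) by (rule dvd_smult_cancel)
  then have "p dvd monom 1 (m-1) * 1" by simp
  then have "p dvd 1" by (rule cancel_monom[OF assms(3) cp])
  then show False using assms(3) by (simp add: prime_elem_def)
qed

lemma reflect_X:
  assumes "m \<ge> 1"
  shows "reflect_poly (monom (1::'a::field) m - 1) = - (monom 1 m - 1)"
proof -
  have "degree (monom (1::'a) m + (-1)) = m" using assms
    by (subst degree_add_eq_left) (auto simp: degree_monom_eq)
  then have d: "degree (monom (1::'a) m - 1) = m" by simp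
  show ?thesis
  proof (rule poly_eqI)
    fix n
    show "coeff (reflect_poly (monom (1::'a) m - 1)) n = coeff (- (monom 1 m - 1)) n"
      unfolding coeff_reflect_poly d coeff_minus coeff_diff coeff_monom coeff_1
      using assms by auto
  qed
qed
lemma reflect_dvd: "p dvd q \<Longrightarrow> reflect_poly p dvd reflect_poly (q::'a::field poly)"
  by (metis dvd_def reflect_poly_mult)

lemma reflect_reflect_dvd:
  fixes f :: "'a::field poly"
  shows "reflect_poly (reflect_poly f) dvd f"
proof (cases "f = 0")
  case False
  obtain h where h: "f = [:-0,1:]^order 0 f * h" "\<not> [:-0,1:] dvd h"
    using order_decomp[OF False] by blast
  have "coeff h 0 \<noteq> 0" using h(2) dvd_iff_poly_eq_0[of 0 h] by (simp add: poly_0_coeff_0)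
  have rx: "reflect_poly [:0,(1::'a):] = 1"
    by (rule poly_eqI) (auto simp: coeff_reflect_poly coeff_pCons split: nat.split)
  have "reflect_poly f = reflect_poly h"
    by (subst h(1)) (simp add: reflect_poly_mult reflect_poly_power rx)
  then have "reflect_poly (reflect_poly f) = h" using \<open>coeff h 0 \<noteq> 0\<close> by simp
  then show ?thesis by (metis h(1) dvd_triv_right)
qed simp

lemma gcd1_iff:
  fixes a b :: "'a::field_gcd poly"
  assumes "a \<noteq> 0"
  shows "gcd a b = 1 \<longleftrightarrow> (\<forall>p. prime p \<longrightarrow> p dvd a \<longrightarrow> \<not> p dvd b)"
proof
  assume h: "gcd a b = 1"
  show "\<forall>p. prime p \<longrightarrow> p dvd a \<longrightarrow> \<not> p dvd b"
  proof (intro allI impI notI)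
    fix p assume "prime p" "p dvd a" "p dvd b"
    then have "p dvd gcd a b" by simp
    then have "is_unit p" using h by simp
    then show False using \<open>prime p\<close> by (simp add: prime_def prime_elem_def)
  qed
next
  assume h: "\<forall>p. prime p \<longrightarrow> p dvd a \<longrightarrow> \<not> p dvd b"
  have "is_unit (gcd a b)"
  proof (rule ccontr)
    assume "\<not> is_unit (gcd a b)"
    moreover have "gcd a b \<noteq> 0" using assms by simp
    ultimately obtain q where "q dvd gcd a b" "prime q" using prime_divisor_exists by blast
    then show False using h by (meson dvd_trans gcd_dvd1 gcd_dvd2)
  qed
  then show "gcd a b = 1" by (simp add: is_unit_gcd coprime_iff_gcd_eq_1)
qed

lemma main:
  fixes g11 g12 :: "'a::{field_gcd,finite} poly"
  assumes m1: "m \<ge> 1" and cm: "of_nat m \<noteq> (0::'a)" and d11: "g11 dvd monom 1 m - 1"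
    and sr: "self_reciprocal g"
    and gdef: "g = gcd g11 g12" and g11'def: "g11' = g11 div g"
    and g22def: "g22 = (monom 1 m - 1) div g11'" and g22'def: "g22' = g22 div g"
    and r22def: "r22 = gcd g22' (reflect_poly g22')" and t22def: "t22 = g22' div r22"
  shows "gcd t22 g12 = 1 \<longleftrightarrow> gcd t22 (g11 * bar_poly m g11 + g12 * bar_poly m g12) = 1"
proof -
  define X where "X = (monom 1 m - 1 :: 'a poly)"
  have X0: "X \<noteq> 0" using X0[OF m1, where 'a='a] unfolding X_def by auto
  have g110: "g11 \<noteq> 0" using X0 d11 X_def by auto
  have g0: "g \<noteq> 0" using g110 gdef by simp
  obtain c where Xc: "X = g11 * c" using d11 X_def by blast
  have g11e: "g11 = g11' * g" using g11'def gdef by simp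
  have g11'0: "g11' \<noteq> 0" using g11e g110 by auto
  have "g22 = (g11' * (g * c)) div g11'" using g22def Xc X_def g11e by (simp add: mult_ac)
  then have "g22 = g * c" using g11'0 by simp
  then have g22'c: "g22' = c" using g22'def g0 by simp
  have Xf: "X = g11 * g22'" using Xc g22'c by simp
  have g22'0: "g22' \<noteq> 0" using Xf X0 by auto
  have tr: "g22' = t22 * r22" using t22def r22def by simp
  have t0: "t22 \<noteq> 0" using tr g22'0 by auto
  have key: "p dvd g11 * bar_poly m g11 \<and> (p dvd g12 * bar_poly m g12 \<longrightarrow> p dvd g12)"
    if pp: "prime p" and pt: "p dvd t22" for p
  proof -
    have pe: "prime_elem p" using pp by simp
    have pg22: "p dvd g22'" using pt tr by simp
    have pX: "p dvd X" using pg22 Xf by simp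
    have cp: "coeff p 0 \<noteq> 0" using coeff0_nz[OF m1] pX X_def by simp
    have n11: "\<not> p dvd g11"
    proof
      assume "p dvd g11"
      then have "p * p dvd X" using Xf pg22 by (simp add: mult_dvd_mono)
      then show False using sqfree[OF m1 cm pe] X_def by simp
    qed
    have nr: "\<not> p dvd reflect_poly g22'"
    proof
      assume "p dvd reflect_poly g22'"
      then have "p dvd r22" using pg22 r22def by simp
      then have "p * p dvd t22 * r22" using pt by (simp add: mult_dvd_mono)
      then have "p * p dvd X" using Xf tr by (metis dvd_mult)
      then show False using sqfree[OF m1 cm pe] X_def by simp
    qed
    have rX: "reflect_poly X = - X" using reflect_X[OF m1, where 'a='a] X_def by simp
    have "p dvd reflect_poly X" unfolding rX using pX by (simp only: dvd_minus_iff)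
    then have "p dvd reflect_poly g11 * reflect_poly g22'" using Xf by (simp add: reflect_poly_mult)
    then have pr11: "p dvd reflect_poly g11" using nr pe prime_elem_dvd_mult_iff by blast
    then have "p dvd bar_poly m g11" unfolding bar_poly_def by simp
    then have A: "p dvd g11 * bar_poly m g11" by simp
    have B: "p dvd g12" if h: "p dvd g12 * bar_poly m g12"
    proof (rule ccontr)
      assume n12: "\<not> p dvd g12"
      then have "p dvd bar_poly m g12" using h pe prime_elem_dvd_mult_iff by blast
      then have "p dvd reflect_poly g12" unfolding bar_poly_def using cancel_monom[OF pe cp] by blast
      then have "reflect_poly p dvd reflect_poly (reflect_poly g12)" by (rule reflect_dvd)
      then have r12: "reflect_poly p dvd g12" using reflect_reflect_dvd dvd_trans by blast
      have "coeff g11 0 \<noteq> 0" using coeff0_nz[OF m1 d11] .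
      then have r11: "reflect_poly p dvd g11" using reflect_dvd[OF pr11] by simp
      have "reflect_poly p dvd g" using r11 r12 gdef by simp
      then have "reflect_poly (reflect_poly p) dvd reflect_poly g" by (rule reflect_dvd)
      then have "p dvd reflect_poly g" using cp by simp
      moreover obtain \<alpha> where al: "reflect_poly g = smult \<alpha> g" using sr unfolding self_reciprocal_def by blast
      ultimately have pa: "p dvd smult \<alpha> g" by simp
      have a0: "\<alpha> \<noteq> 0"
      proof
        assume "\<alpha> = 0"
        then have "reflect_poly g = 0" using al by simp
        then show False using g0 by simp
      qed
      have "p dvd g" by (rule dvd_smult_cancel[OF pa a0])
      then have "p dvd g11" using gdef by simp
      then show False using n11 by simp
    qed
    show ?thesis using A B by blast
  qed
  have eq: "p dvd g12 \<longleftrightarrow> p dvd (g11 * bar_poly m g11 + g12 * bar_poly m g12)"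
    if "prime p" "p dvd t22" for p
  proof -
    have k1: "p dvd g11 * bar_poly m g11" and k2: "p dvd g12 * bar_poly m g12 \<Longrightarrow> p dvd g12"
      using key[OF that] by blast+
    have "p dvd (g11 * bar_poly m g11 + g12 * bar_poly m g12) \<longleftrightarrow> p dvd g12 * bar_poly m g12"
      by (rule dvd_add_right_iff[OF k1])
    moreover have "p dvd g12 \<Longrightarrow> p dvd g12 * bar_poly m g12" by simp
    ultimately show ?thesis using k2 by blast
  qed
  show ?thesis unfolding gcd1_iff[OF t0]
  proof (intro iffI allI impI)
    fix p assume h: "\<forall>p. prime p \<longrightarrow> p dvd t22 \<longrightarrow> \<not> p dvd g12" "prime p" "p dvd t22"
    then show "\<not> p dvd (g11 * bar_poly m g11 + g12 * bar_poly m g12)" using eq[OF h(2,3)] by simp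
  next
    fix p assume h: "\<forall>p. prime p \<longrightarrow> p dvd t22 \<longrightarrow> \<not> p dvd (g11 * bar_poly m g11 + g12 * bar_poly m g12)" "prime p" "p dvd t22"
    then show "\<not> p dvd g12" using eq[OF h(2,3)] by simp
  qed
qed

theorem lemma4p1:
  fixes g11 g12 :: "'a::{field_gcd,finite} poly" and m :: nat
  assumes "m \<ge> 1"
    and "coprime (CARD('a)) m"
    and "g11 dvd (monom 1 m - 1)"
    and "degree g12 < m"
    and "self_reciprocal (gcd g11 g12)"
  shows "let g = gcd g11 g12;
             g11' = g11 div g;
             g22 = (monom 1 m - 1) div g11';
             g22' = g22 div g;
             r22 = gcd g22' (reflect_poly g22');
             t22 = g22' div r22
         in (gcd t22 g12 = 1 \<longleftrightarrow>
             gcd t22 (g11 * bar_poly m g11 + g12 * bar_poly m g12) = 1)"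
  unfolding Let_def
  by (rule main[OF assms(1) char_m[OF assms(2)] assms(3) assms(5) refl refl refl refl refl refl])

end
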